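(* Let $L=E[C_1,\dots,C_n]$ be a congruence normal lattice. Then $L$ is left modular if and only if, for every $i\in[n]$, the heart $H(C_i)$ contains an element lying on a maximal left modular chain of $E[C_1,\dots,C_{i-1}]$.
   Context: All lattices are finite. A subset $C$ of a poset is convex if $x,y\in C$ implies $[x,y]\subseteq C$. For a convex subset $C$ of a lattice $L$, let $I_L(C)=\{y\in L\mid \exists x\in C,\ y\le x\}$. The doubling $L[C]$ is the subposet of $L\times\{0<1\}$ (product order) on the set $\big(I_L(C)\times\{0\}\big)\sqcup\big(((L\setminus I_L(C))\cup C)\times\{1\}\big)$; it is a lattice. $E[\,]$ is the one-element lattice and $E[C_1,\dots,C_{i+1}]:=E[C_1,\dots,C_i][C_{i+1}]$, where each $C_{i+1}$ is a nonempty convex subset of $E[C_1,\dots,C_i]$. The heart $H(C)$ of a convex subset $C$ is the set of elements of $C$ that are below all maximal elements of $C$ and above all minimal elements of $C$. An element $a$ of a lattice is left modular if for all $b<c$ one has $(b\vee a)\wedge c=b\vee(a\wedge c)$. A maximal left modular chain is a maximal chain all of whose elements are left modular; a lattice is left modular if it has a maximal left modular chain. *)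

theory Defs
  imports Main
begin

text \<open>Every lattice E[C_1,...,C_k] is realised concretely as a set of
bool lists of length k: the doubling L[C] appends one bit (False = 0, True = 1)
to the elements of L. Since E[] has one element and L[C] carries the product
order of L x {0<1}, the order on E[C_1,...,C_k] is exactly the pointwise order
on bool lists (False < True).\<close>

definition leq :: "bool list \<Rightarrow> bool list \<Rightarrow> bool" where
  "leq xs ys \<longleftrightarrow> list_all2 (\<le>) xs ys"

definition lt :: "bool list \<Rightarrow> bool list \<Rightarrow> bool" where
  "lt xs ys \<longleftrightarrow> leq xs ys \<and> xs \<noteq> ys"

definition convex_in :: "bool list set \<Rightarrow> bool list set \<Rightarrow> bool" where
  "convex_in A C \<longleftrightarrow> C \<subseteq> A \<and>
     (\<forall>x\<in>C. \<forall>y\<in>C. \<forall>z\<in>A. leq x z \<and> leq z y \<longrightarrow> z \<in> C)"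

definition downset :: "bool list set \<Rightarrow> bool list set \<Rightarrow> bool list set" where
  "downset L C = {y \<in> L. \<exists>x\<in>C. leq y x}"

definition doubling :: "bool list set \<Rightarrow> bool list set \<Rightarrow> bool list set" where
  "doubling L C = {x @ [False] | x. x \<in> downset L C}
                \<union> {x @ [True] | x. x \<in> (L - downset L C) \<union> C}"

definition E :: "bool list set list \<Rightarrow> bool list set" where
  "E Cs = foldl doubling {[]} Cs"

definition doubling_seq :: "bool list set list \<Rightarrow> bool" where
  "doubling_seq Cs \<longleftrightarrow> (\<forall>i<length Cs. Cs ! i \<noteq> {} \<and> convex_in (E (take i Cs)) (Cs ! i))"

definition is_lub :: "bool list set \<Rightarrow> bool list \<Rightarrow> bool list \<Rightarrow> bool list \<Rightarrow> bool" where
  "is_lub A x y z \<longleftrightarrow> z \<in> A \<and> leq x z \<and> leq y z \<and>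
     (\<forall>u\<in>A. leq x u \<and> leq y u \<longrightarrow> leq z u)"

definition is_glb :: "bool list set \<Rightarrow> bool list \<Rightarrow> bool list \<Rightarrow> bool list \<Rightarrow> bool" where
  "is_glb A x y z \<longleftrightarrow> z \<in> A \<and> leq z x \<and> leq z y \<and>
     (\<forall>u\<in>A. leq u x \<and> leq u y \<longrightarrow> leq u z)"

definition join :: "bool list set \<Rightarrow> bool list \<Rightarrow> bool list \<Rightarrow> bool list" where
  "join A x y = (THE z. is_lub A x y z)"

definition meet :: "bool list set \<Rightarrow> bool list \<Rightarrow> bool list \<Rightarrow> bool list" where
  "meet A x y = (THE z. is_glb A x y z)"

definition left_modular_elem :: "bool list set \<Rightarrow> bool list \<Rightarrow> bool" where
  "left_modular_elem A a \<longleftrightarrow> a \<in> A \<and>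
     (\<forall>b\<in>A. \<forall>c\<in>A. lt b c \<longrightarrow>
        meet A (join A b a) c = join A b (meet A a c))"

definition is_chain :: "bool list set \<Rightarrow> bool list set \<Rightarrow> bool" where
  "is_chain A M \<longleftrightarrow> M \<subseteq> A \<and> (\<forall>x\<in>M. \<forall>y\<in>M. leq x y \<or> leq y x)"

definition maximal_chain :: "bool list set \<Rightarrow> bool list set \<Rightarrow> bool" where
  "maximal_chain A M \<longleftrightarrow> is_chain A M \<and> (\<forall>M'. is_chain A M' \<and> M \<subseteq> M' \<longrightarrow> M' = M)"

definition maximal_left_modular_chain :: "bool list set \<Rightarrow> bool list set \<Rightarrow> bool" where
  "maximal_left_modular_chain A M \<longleftrightarrow> maximal_chain A M \<and> (\<forall>a\<in>M. left_modular_elem A a)"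

definition left_modular_lattice :: "bool list set \<Rightarrow> bool" where
  "left_modular_lattice A \<longleftrightarrow> (\<exists>M. maximal_left_modular_chain A M)"

definition heart :: "bool list set \<Rightarrow> bool list set" where
  "heart C = {x \<in> C. (\<forall>m\<in>C. (\<forall>u\<in>C. leq m u \<longrightarrow> u = m) \<longrightarrow> leq x m) \<and>
                     (\<forall>m\<in>C. (\<forall>u\<in>C. leq u m \<longrightarrow> u = m) \<longrightarrow> leq m x)}"

end

theory Submission
  imports Defs
begin


lemma leq_refl[simp]: "leq x x"
  unfolding leq_def by (simp add: list_all2_refl)

lemma leq_trans: "leq x y \<Longrightarrow> leq y z \<Longrightarrow> leq x z"
  unfolding leq_def by (rule list_all2_trans[of "(\<le>)" "(\<le>)" "(\<le>)"]) auto

lemma leq_antisym: "leq x y \<Longrightarrow> leq y x \<Longrightarrow> x = y"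
  unfolding leq_def
  by (rule list_all2_antisym) auto

lemma leq_snoc[simp]: "leq (x @ [a]) (y @ [b]) \<longleftrightarrow> leq x y \<and> a \<le> b"
  unfolding leq_def
  by (cases "length x = length y") (auto simp: list_all2_append dest: list_all2_lengthD)

definition is_lat :: "bool list set \<Rightarrow> bool" where
  "is_lat L \<longleftrightarrow> L \<noteq> {} \<and> finite L \<and> (\<forall>x\<in>L. \<forall>y\<in>L. (\<exists>z. is_lub L x y z) \<and> (\<exists>z. is_glb L x y z))"

lemma lub_unique: "is_lub A x y z \<Longrightarrow> is_lub A x y z' \<Longrightarrow> z = z'"
  unfolding is_lub_def by (meson leq_antisym)

lemma glb_unique: "is_glb A x y z \<Longrightarrow> is_glb A x y z' \<Longrightarrow> z = z'"
  unfolding is_glb_def by (meson leq_antisym)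

lemma join_eq: "is_lub A x y z \<Longrightarrow> join A x y = z"
  unfolding join_def using lub_unique by blast

lemma meet_eq: "is_glb A x y z \<Longrightarrow> meet A x y = z"
  unfolding meet_def using glb_unique by blast

lemma join_comm: "join A x y = join A y x"
  unfolding join_def is_lub_def by metis

lemma meet_comm: "meet A x y = meet A y x"
  unfolding meet_def is_glb_def by metis

lemma join_lub: "is_lat L \<Longrightarrow> x \<in> L \<Longrightarrow> y \<in> L \<Longrightarrow> is_lub L x y (join L x y)"
  unfolding is_lat_def using join_eq by metis

lemma meet_glb: "is_lat L \<Longrightarrow> x \<in> L \<Longrightarrow> y \<in> L \<Longrightarrow> is_glb L x y (meet L x y)"
  unfolding is_lat_def using meet_eq by metis

context
  fixes L assumes lat: "is_lat L"
begin

lemma join_in: "x \<in> L \<Longrightarrow> y \<in> L \<Longrightarrow> join L x y \<in> L"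
  using join_lub[OF lat] unfolding is_lub_def by blast
lemma join_ub1: "x \<in> L \<Longrightarrow> y \<in> L \<Longrightarrow> leq x (join L x y)"
  using join_lub[OF lat] unfolding is_lub_def by blast
lemma join_ub2: "x \<in> L \<Longrightarrow> y \<in> L \<Longrightarrow> leq y (join L x y)"
  using join_lub[OF lat] unfolding is_lub_def by blast
lemma join_least: "x \<in> L \<Longrightarrow> y \<in> L \<Longrightarrow> u \<in> L \<Longrightarrow> leq x u \<Longrightarrow> leq y u \<Longrightarrow> leq (join L x y) u"
  using join_lub[OF lat] unfolding is_lub_def by blast
lemma meet_in: "x \<in> L \<Longrightarrow> y \<in> L \<Longrightarrow> meet L x y \<in> L"
  using meet_glb[OF lat] unfolding is_glb_def by blast
lemma meet_lb1: "x \<in> L \<Longrightarrow> y \<in> L \<Longrightarrow> leq (meet L x y) x"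
  using meet_glb[OF lat] unfolding is_glb_def by blast
lemma meet_lb2: "x \<in> L \<Longrightarrow> y \<in> L \<Longrightarrow> leq (meet L x y) y"
  using meet_glb[OF lat] unfolding is_glb_def by blast
lemma meet_greatest: "x \<in> L \<Longrightarrow> y \<in> L \<Longrightarrow> u \<in> L \<Longrightarrow> leq u x \<Longrightarrow> leq u y \<Longrightarrow> leq u (meet L x y)"
  using meet_glb[OF lat] unfolding is_glb_def by blast

lemma join_leq: "x \<in> L \<Longrightarrow> y \<in> L \<Longrightarrow> leq x y \<Longrightarrow> join L x y = y"
  by (meson join_in join_least join_ub2 leq_antisym leq_refl)
lemma join_leq2: "x \<in> L \<Longrightarrow> y \<in> L \<Longrightarrow> leq y x \<Longrightarrow> join L x y = x"
  by (meson join_in join_least join_ub1 leq_antisym leq_refl)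
lemma meet_leq: "x \<in> L \<Longrightarrow> y \<in> L \<Longrightarrow> leq x y \<Longrightarrow> meet L x y = x"
  by (meson meet_in meet_greatest meet_lb1 leq_antisym leq_refl)
lemma meet_leq2: "x \<in> L \<Longrightarrow> y \<in> L \<Longrightarrow> leq y x \<Longrightarrow> meet L x y = y"
  by (meson meet_in meet_greatest meet_lb2 leq_antisym leq_refl)

lemma modular_ineq:
  assumes a: "a \<in> L" and b: "b \<in> L" and c: "c \<in> L" and bc: "leq b c"
  shows "leq (join L b (meet L a c)) (meet L (join L b a) c)"
proof -
  have ba: "join L b a \<in> L" using join_in[OF b a] .
  have ac: "meet L a c \<in> L" using meet_in[OF a c] .
  have r: "meet L (join L b a) c \<in> L" using meet_in[OF ba c] .
  have 1: "leq b (meet L (join L b a) c)"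
    using meet_greatest[OF ba c b join_ub1[OF b a] bc] .
  have "leq (meet L a c) (join L b a)"
    using leq_trans[OF meet_lb1[OF a c] join_ub2[OF b a]] .
  then have 2: "leq (meet L a c) (meet L (join L b a) c)"
    using meet_greatest[OF ba c ac _ meet_lb2[OF a c]] by blast
  show ?thesis using join_least[OF b ac r 1 2] .
qed

end



locale dbl =
  fixes L C
  assumes lat: "is_lat L" and conv: "convex_in L C" and ne: "C \<noteq> {}"
begin

abbreviation "I \<equiv> downset L C"
abbreviation "D \<equiv> doubling L C"

lemma C_sub: "C \<subseteq> L" using conv unfolding convex_in_def by blast
lemma C_I: "x \<in> C \<Longrightarrow> x \<in> I" unfolding downset_def using C_sub leq_refl by blast
lemma I_L: "x \<in> I \<Longrightarrow> x \<in> L" unfolding downset_def by auto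
lemma down_closed: "y \<in> L \<Longrightarrow> x \<in> I \<Longrightarrow> leq y x \<Longrightarrow> y \<in> I"
  unfolding downset_def using leq_trans by blast
lemma conv_mid: "x \<in> C \<Longrightarrow> y \<in> C \<Longrightarrow> z \<in> L \<Longrightarrow> leq x z \<Longrightarrow> leq z y \<Longrightarrow> z \<in> C"
  using conv unfolding convex_in_def by blast
lemma conv_up: "x \<in> C \<Longrightarrow> z \<in> I \<Longrightarrow> leq x z \<Longrightarrow> z \<in> C"
  using conv_mid I_L unfolding downset_def by blast

lemma mem_D: "x @ [b] \<in> D \<longleftrightarrow> x \<in> L \<and> (if b then x \<notin> I \<or> x \<in> C else x \<in> I)"
  unfolding doubling_def using C_sub I_L by auto

lemma mem_DF[simp]: "x @ [False] \<in> D \<longleftrightarrow> x \<in> I"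
  using mem_D I_L by auto
lemma mem_DT[simp]: "x @ [True] \<in> D \<longleftrightarrow> x \<in> L \<and> (x \<notin> I \<or> x \<in> C)"
  using mem_D by auto

lemma D_form: "p \<in> D \<Longrightarrow> \<exists>x b. p = x @ [b]"
  unfolding doubling_def by auto

lemma D_L: "x @ [b] \<in> D \<Longrightarrow> x \<in> L"
  using mem_D by auto

lemma lub_D:
  assumes "x @ [i] \<in> D" "y @ [j] \<in> D"
  shows "is_lub D (x @ [i]) (y @ [j]) (join L x y @ [i \<or> j \<or> join L x y \<notin> I])"
proof -
  have x: "x \<in> L" and y: "y \<in> L" using assms D_L by auto
  let ?z = "join L x y"
  have z: "?z \<in> L" using join_in[OF lat x y] .
  have xz: "leq x ?z" and yz: "leq y ?z" using join_ub1[OF lat x y] join_ub2[OF lat x y] by auto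
  have mem: "?z @ [i \<or> j \<or> ?z \<notin> I] \<in> D"
  proof (cases "?z \<in> I")
    case True
    show ?thesis
    proof (cases "i \<or> j")
      case True
      then have "x \<in> C \<or> y \<in> C"
        using assms `?z \<in> I` down_closed x y xz yz by (auto simp: mem_D)
      then have "?z \<in> C" using conv_up `?z \<in> I` xz yz by blast
      then show ?thesis using True z by (auto simp: mem_D)
    next
      case False then show ?thesis using `?z \<in> I` by simp
    qed
  next
    case False then show ?thesis using z by simp
  qed
  show ?thesis unfolding is_lub_def
  proof (intro conjI ballI impI)
    show "?z @ [i \<or> j \<or> ?z \<notin> I] \<in> D" by (rule mem)
    show "leq (x @ [i]) (?z @ [i \<or> j \<or> ?z \<notin> I])" using xz by simp
    show "leq (y @ [j]) (?z @ [i \<or> j \<or> ?z \<notin> I])" using yz by simp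
  next
    fix u assume u: "u \<in> D" and ub: "leq (x @ [i]) u \<and> leq (y @ [j]) u"
    obtain v l where v: "u = v @ [l]" using D_form[OF u] by blast
    have vL: "v \<in> L" using u v D_L by simp
    have "leq x v" "leq y v" "i \<le> l" "j \<le> l" using ub v by auto
    then have zv: "leq ?z v" using join_least[OF lat x y vL] by simp
    have "?z \<notin> I \<Longrightarrow> l"
      using u v zv down_closed z by (cases l) auto
    then show "leq (?z @ [i \<or> j \<or> ?z \<notin> I]) u"
      using v zv `i \<le> l` `j \<le> l` by auto
  qed
qed

lemma glb_D:
  assumes "x @ [i] \<in> D" "y @ [j] \<in> D"
  shows "is_glb D (x @ [i]) (y @ [j]) (meet L x y @ [i \<and> j \<and> \<not> (meet L x y \<in> I \<and> meet L x y \<notin> C)])"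
proof -
  have x: "x \<in> L" and y: "y \<in> L" using assms D_L by auto
  let ?z = "meet L x y"
  let ?k = "i \<and> j \<and> \<not> (?z \<in> I \<and> ?z \<notin> C)"
  have z: "?z \<in> L" using meet_in[OF lat x y] .
  have xz: "leq ?z x" and yz: "leq ?z y" using meet_lb1[OF lat x y] meet_lb2[OF lat x y] by auto
  have mem: "?z @ [?k] \<in> D"
  proof (cases ?k)
    case True then show ?thesis using z by auto
  next
    case False
    then have "\<not> i \<or> \<not> j \<or> ?z \<in> I" by blast
    moreover have "\<not> i \<Longrightarrow> ?z \<in> I"
      using assms(1) down_closed[OF z _ xz] by (cases i) auto
    moreover have "\<not> j \<Longrightarrow> ?z \<in> I"
      using assms(2) down_closed[OF z _ yz] by (cases j) auto
    ultimately have "?z \<in> I" by blast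
    moreover have "?k = False" using False by blast
    ultimately show ?thesis by (simp only: mem_DF)
  qed
  show ?thesis unfolding is_glb_def
  proof (intro conjI ballI impI)
    show "?z @ [?k] \<in> D" by (rule mem)
    show "leq (?z @ [?k]) (x @ [i])" using xz by simp
    show "leq (?z @ [?k]) (y @ [j])" using yz by simp
  next
    fix u assume u: "u \<in> D" and lb: "leq u (x @ [i]) \<and> leq u (y @ [j])"
    obtain v l where v: "u = v @ [l]" using D_form[OF u] by blast
    have vL: "v \<in> L" using u v D_L by simp
    have "leq v x" "leq v y" "l \<le> i" "l \<le> j" using lb v by auto
    then have zv: "leq v ?z" using meet_greatest[OF lat x y vL] by simp
    have "l \<Longrightarrow> \<not> (?z \<in> I \<and> ?z \<notin> C)"
    proof
      assume l and zz: "?z \<in> I \<and> ?z \<notin> C"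
      then have "v \<in> I" using down_closed vL zv by blast
      then have "v \<in> C" using u v `l` by simp
      then show False using conv_up zz zv by blast
    qed
    then show "leq u (?z @ [?k])"
      using v zv `l \<le> i` `l \<le> j` by auto
  qed
qed

lemma join_D: "x @ [i] \<in> D \<Longrightarrow> y @ [j] \<in> D \<Longrightarrow>
   join D (x @ [i]) (y @ [j]) = join L x y @ [i \<or> j \<or> join L x y \<notin> I]"
  using lub_D join_eq by blast

lemma meet_D: "x @ [i] \<in> D \<Longrightarrow> y @ [j] \<in> D \<Longrightarrow>
   meet D (x @ [i]) (y @ [j]) = meet L x y @ [i \<and> j \<and> \<not> (meet L x y \<in> I \<and> meet L x y \<notin> C)]"
  using glb_D meet_eq by blast

lemma finite_D: "finite D"
proof -
  have "D \<subseteq> (\<lambda>(x, b). x @ [b]) ` (L \<times> UNIV)"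
    using D_form D_L by fastforce
  moreover have "finite L" using lat unfolding is_lat_def by blast
  ultimately show ?thesis by (meson finite_SigmaI finite_UNIV finite_imageI finite_subset)
qed

lemma lat_D: "is_lat D"
proof -
  obtain c where "c \<in> C" using ne by blast
  then have "c @ [False] \<in> D" using C_I by simp
  moreover have "(\<exists>z. is_lub D p q z) \<and> (\<exists>z. is_glb D p q z)" if pD: "p \<in> D" and qD: "q \<in> D" for p q
  proof -
    obtain x i y j where "p = x @ [i]" "q = y @ [j]" using D_form[OF pD] D_form[OF qD] by blast
    then show ?thesis using lub_D glb_D pD qD by blast
  qed
  ultimately show ?thesis unfolding is_lat_def using finite_D by blast
qed

end



context dbl
begin

lemma join_D_in: "p \<in> D \<Longrightarrow> q \<in> D \<Longrightarrow> join D p q \<in> D"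
  using join_in[OF lat_D] .
lemma meet_D_in: "p \<in> D \<Longrightarrow> q \<in> D \<Longrightarrow> meet D p q \<in> D"
  using meet_in[OF lat_D] .

lemma butlast_join_D: "p \<in> D \<Longrightarrow> q \<in> D \<Longrightarrow> butlast (join D p q) = join L (butlast p) (butlast q)"
proof -
  assume p: "p \<in> D" and q: "q \<in> D"
  obtain x i y j where "p = x @ [i]" "q = y @ [j]" using D_form[OF p] D_form[OF q] by blast
  then show ?thesis using join_D p q by simp
qed

lemma butlast_meet_D: "p \<in> D \<Longrightarrow> q \<in> D \<Longrightarrow> butlast (meet D p q) = meet L (butlast p) (butlast q)"
proof -
  assume p: "p \<in> D" and q: "q \<in> D"
  obtain x i y j where "p = x @ [i]" "q = y @ [j]" using D_form[OF p] D_form[OF q] by blast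
  then show ?thesis using meet_D p q by simp
qed

lemma proj_LM:
  assumes lm: "left_modular_elem D (a @ [\<alpha>])"
  shows "left_modular_elem L a"
proof -
  have aD: "a @ [\<alpha>] \<in> D" using lm unfolding left_modular_elem_def by blast
  have aL: "a \<in> L" using D_L[OF aD] .
  show ?thesis unfolding left_modular_elem_def
  proof (intro conjI ballI impI)
    show "a \<in> L" by (rule aL)
  next
    fix b c assume b: "b \<in> L" and c: "c \<in> L" and bc: "lt b c"
    define bb where "bb = b @ [b \<notin> I]"
    define cc where "cc = c @ [c \<notin> I \<or> c \<in> C]"
    have bbD: "bb \<in> D" unfolding bb_def using b by (cases "b \<in> I") auto
    have ccD: "cc \<in> D" unfolding cc_def using c by (cases "c \<notin> I \<or> c \<in> C") auto
    have lbc: "leq b c" "b \<noteq> c" using bc unfolding lt_def by auto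
    have "b \<notin> I \<Longrightarrow> c \<notin> I" using down_closed[OF b _ lbc(1)] by blast
    then have "lt bb cc" unfolding lt_def bb_def cc_def using lbc by auto
    then have eq: "meet D (join D bb (a @ [\<alpha>])) cc = join D bb (meet D (a @ [\<alpha>]) cc)"
      using lm bbD ccD unfolding left_modular_elem_def by blast
    have "butlast (meet D (join D bb (a @ [\<alpha>])) cc) = meet L (join L b a) c"
      using butlast_meet_D[OF join_D_in[OF bbD aD] ccD] butlast_join_D[OF bbD aD]
      unfolding bb_def cc_def by simp
    moreover have "butlast (join D bb (meet D (a @ [\<alpha>]) cc)) = join L b (meet L a c)"
      using butlast_join_D[OF bbD meet_D_in[OF aD ccD]] butlast_meet_D[OF aD ccD]
      unfolding bb_def cc_def by simp
    ultimately show "meet L (join L b a) c = join L b (meet L a c)" using eq by simp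
  qed
qed

lemma first_comp_eq:
  assumes lmL: "left_modular_elem L a" and aD: "a @ [\<alpha>] \<in> D"
    and bD: "b @ [\<beta>] \<in> D" and cD: "c @ [\<gamma>] \<in> D" and lt: "lt (b @ [\<beta>]) (c @ [\<gamma>])"
  shows "butlast (meet D (join D (b @ [\<beta>]) (a @ [\<alpha>])) (c @ [\<gamma>]))
       = butlast (join D (b @ [\<beta>]) (meet D (a @ [\<alpha>]) (c @ [\<gamma>])))"
proof -
  have a: "a \<in> L" and b: "b \<in> L" and c: "c \<in> L" using aD bD cD D_L by auto
  have bc: "leq b c" using lt unfolding lt_def by simp
  have "meet L (join L b a) c = join L b (meet L a c)"
  proof (cases "b = c")
    case True
    then show ?thesis
      using meet_leq2[OF lat join_in[OF lat b a] b join_ub1[OF lat b a]]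
        join_leq2[OF lat b meet_in[OF lat a b] meet_lb2[OF lat a b]] by simp
  next
    case False
    then have "lt b c" using bc unfolding lt_def by simp
    then show ?thesis using lmL b c unfolding left_modular_elem_def by blast
  qed
  then show ?thesis
    using butlast_meet_D[OF join_D_in[OF bD aD] cD] butlast_join_D[OF bD aD]
      butlast_join_D[OF bD meet_D_in[OF aD cD]] butlast_meet_D[OF aD cD] by simp
qed

lemma bits_cases:
  assumes "x \<in> D" "y \<in> D" "butlast x = butlast y" "leq y x"
  obtains "x = y" | w where "x = w @ [True]" "y = w @ [False]"
proof -
  obtain u p v q where "x = u @ [p]" "y = v @ [q]" using D_form[OF assms(1)] D_form[OF assms(2)] by blast
  then show ?thesis using assms(3,4) that by (cases p; cases q) auto
qed

lemma lift_F:
  assumes aI: "a \<in> I" and lmL: "left_modular_elem L a" and H: "\<forall>w\<in>C. join L a w \<in> C"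
  shows "left_modular_elem D (a @ [False])"
  unfolding left_modular_elem_def
proof (intro conjI ballI impI)
  have aD: "a @ [False] \<in> D" using aI by simp
  then show "a @ [False] \<in> D" .
  have a: "a \<in> L" using aI I_L by blast
  fix bb cc assume bbD: "bb \<in> D" and ccD: "cc \<in> D" and lt: "lt bb cc"
  obtain b \<beta> c \<gamma> where bb: "bb = b @ [\<beta>]" and cc: "cc = c @ [\<gamma>]" using D_form[OF bbD] D_form[OF ccD] by blast
  let ?aa = "a @ [False]"
  let ?J = "join D bb ?aa"
  let ?LHS = "meet D ?J cc" and ?RHS = "join D bb (meet D ?aa cc)"
  have JD: "?J \<in> D" using join_D_in[OF bbD aD] .
  have LD: "?LHS \<in> D" using meet_D_in[OF JD ccD] .
  have RD: "?RHS \<in> D" using join_D_in[OF bbD meet_D_in[OF aD ccD]] .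
  have fc: "butlast ?LHS = butlast ?RHS"
    using first_comp_eq[OF lmL aD] bbD ccD lt bb cc by simp
  have bcl: "leq bb cc" using lt unfolding lt_def by simp
  have ineq: "leq ?RHS ?LHS"
    using modular_ineq[OF lat_D aD bbD ccD bcl] .
  show "?LHS = ?RHS"
  proof (rule bits_cases[OF LD RD fc ineq])
    fix w assume L1: "?LHS = w @ [True]" and R1: "?RHS = w @ [False]"
    have "w \<in> I" using RD R1 by simp
    moreover have "w \<notin> I \<or> w \<in> C" using LD L1 by simp
    ultimately have wC: "w \<in> C" by blast
    have "leq bb ?RHS" using join_ub1[OF lat_D bbD meet_D_in[OF aD ccD]] .
    then have b\<beta>: "leq b w" "\<beta> = False" using R1 bb by auto
    obtain z k where Jz: "?J = z @ [k]" using D_form[OF JD] by blast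
    have "leq ?LHS ?J" using meet_lb1[OF lat_D JD ccD] .
    then have k: "k = True" using L1 Jz by simp
    let ?u = "join L a w"
    have uC: "?u \<in> C" using H wC by blast
    have uD: "?u @ [False] \<in> D" using C_I[OF uC] by simp
    have wL: "w \<in> L" using wC C_sub by blast
    have "leq b ?u" using leq_trans[OF b\<beta>(1) join_ub2[OF lat a wL]] .
    then have "leq bb (?u @ [False])" using bb b\<beta> by simp
    moreover have "leq ?aa (?u @ [False])" using join_ub1[OF lat a wL] by simp
    ultimately have "leq ?J (?u @ [False])" using join_least[OF lat_D bbD aD uD] by blast
    then show ?thesis using Jz k by simp
  qed simp
qed

lemma lift_T:
  assumes aD: "a @ [True] \<in> D" and lmL: "left_modular_elem L a" and H: "\<forall>w\<in>C. meet L a w \<in> C"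
  shows "left_modular_elem D (a @ [True])"
  unfolding left_modular_elem_def
proof (intro conjI ballI impI)
  show "a @ [True] \<in> D" by (rule aD)
  have a: "a \<in> L" using aD D_L by blast
  fix bb cc assume bbD: "bb \<in> D" and ccD: "cc \<in> D" and lt: "lt bb cc"
  obtain b \<beta> c \<gamma> where bb: "bb = b @ [\<beta>]" and cc: "cc = c @ [\<gamma>]" using D_form[OF bbD] D_form[OF ccD] by blast
  let ?aa = "a @ [True]"
  let ?J = "join D bb ?aa" and ?M = "meet D ?aa cc"
  let ?LHS = "meet D ?J cc" and ?RHS = "join D bb ?M"
  have JD: "?J \<in> D" using join_D_in[OF bbD aD] .
  have MD: "?M \<in> D" using meet_D_in[OF aD ccD] .
  have LD: "?LHS \<in> D" using meet_D_in[OF JD ccD] .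
  have RD: "?RHS \<in> D" using join_D_in[OF bbD MD] .
  have fc: "butlast ?LHS = butlast ?RHS"
    using first_comp_eq[OF lmL aD] bbD ccD lt bb cc by simp
  have bcl: "leq bb cc" using lt unfolding lt_def by simp
  have ineq: "leq ?RHS ?LHS"
    using modular_ineq[OF lat_D aD bbD ccD bcl] .
  show "?LHS = ?RHS"
  proof (rule bits_cases[OF LD RD fc ineq])
    fix w assume L1: "?LHS = w @ [True]" and R1: "?RHS = w @ [False]"
    have "w \<in> I" using RD R1 by simp
    moreover have "w \<notin> I \<or> w \<in> C" using LD L1 by simp
    ultimately have wC: "w \<in> C" by blast
    have "leq ?LHS cc" using meet_lb2[OF lat_D JD ccD] .
    then have wc: "leq w c" "\<gamma> = True" using L1 cc by auto
    obtain z k where Mz: "?M = z @ [k]" using D_form[OF MD] by blast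
    have "leq ?M ?RHS" using join_ub2[OF lat_D bbD MD] .
    then have k: "k = False" using R1 Mz by simp
    let ?u = "meet L a w"
    have uC: "?u \<in> C" using H wC by blast
    have uL: "?u \<in> L" using uC C_sub by blast
    have uD: "?u @ [True] \<in> D" using uC uL by simp
    have wL: "w \<in> L" using wC C_sub by blast
    have "leq ?u c" using leq_trans[OF meet_lb2[OF lat a wL] wc(1)] .
    then have "leq (?u @ [True]) cc" using cc wc by simp
    moreover have "leq (?u @ [True]) ?aa" using meet_lb1[OF lat a wL] by simp
    ultimately have "leq (?u @ [True]) ?M" using meet_greatest[OF lat_D aD ccD uD] by blast
    then show ?thesis using Mz k by simp
  qed simp
qed

lemma LM_F:
  assumes lm: "left_modular_elem D (a @ [False])" and wC: "w \<in> C"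
  shows "join L a w \<in> C"
proof -
  have aD: "a @ [False] \<in> D" using lm unfolding left_modular_elem_def by blast
  have aI: "a \<in> I" using aD by simp
  have a: "a \<in> L" using aI I_L by blast
  have wL: "w \<in> L" using wC C_sub by blast
  let ?bb = "w @ [False]" and ?cc = "w @ [True]" and ?aa = "a @ [False]"
  have bbD: "?bb \<in> D" using C_I[OF wC] by simp
  have ccD: "?cc \<in> D" using wC wL by simp
  have "lt ?bb ?cc" unfolding lt_def by simp
  then have eq: "meet D (join D ?bb ?aa) ?cc = join D ?bb (meet D ?aa ?cc)"
    using lm bbD ccD unfolding left_modular_elem_def by blast
  have wa: "join L w a = join L a w" by (rule join_comm)
  have inI: "join L a w \<in> I"
  proof (rule ccontr)
    assume nI: "join L a w \<notin> I"
    have J: "join D ?bb ?aa = join L a w @ [True]" using join_D[OF bbD aD] nI wa by simp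
    have JD: "join L a w @ [True] \<in> D" using J join_D_in[OF bbD aD] by simp
    have "leq ?cc (join L a w @ [True])" using join_ub2[OF lat a wL] by simp
    then have "leq ?cc (meet D (join D ?bb ?aa) ?cc)"
      using meet_greatest[OF lat_D JD ccD ccD] J by simp
    moreover have M: "meet D ?aa ?cc = meet L a w @ [False]" using meet_D[OF aD ccD] by simp
    have MD: "meet L a w @ [False] \<in> D" using M meet_D_in[OF aD ccD] by simp
    have "join D ?bb (meet D ?aa ?cc) = ?bb"
      using join_leq2[OF lat_D bbD MD] M meet_lb2[OF lat a wL] by simp
    ultimately show False using eq by simp
  qed
  show ?thesis using conv_up[OF wC inI join_ub2[OF lat a wL]] .
qed

lemma LM_T:
  assumes lm: "left_modular_elem D (a @ [True])" and wC: "w \<in> C"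
  shows "meet L a w \<in> C"
proof (rule ccontr)
  assume nC: "meet L a w \<notin> C"
  have aD: "a @ [True] \<in> D" using lm unfolding left_modular_elem_def by blast
  have a: "a \<in> L" using aD D_L by blast
  have wL: "w \<in> L" using wC C_sub by blast
  let ?bb = "w @ [False]" and ?cc = "w @ [True]" and ?aa = "a @ [True]"
  have bbD: "?bb \<in> D" using C_I[OF wC] by simp
  have ccD: "?cc \<in> D" using wC wL by simp
  have "lt ?bb ?cc" unfolding lt_def by simp
  then have eq: "meet D (join D ?bb ?aa) ?cc = join D ?bb (meet D ?aa ?cc)"
    using lm bbD ccD unfolding left_modular_elem_def by blast
  have J: "join D ?bb ?aa = join L w a @ [True]" using join_D[OF bbD aD] by simp
  have JD: "join L w a @ [True] \<in> D" using J join_D_in[OF bbD aD] by simp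
  have "leq ?cc (join L w a @ [True])" using join_ub1[OF lat wL a] by simp
  then have LHS: "meet D (join D ?bb ?aa) ?cc = ?cc"
    using meet_leq2[OF lat_D JD ccD] J by simp
  have mI: "meet L a w \<in> I" using down_closed[OF meet_in[OF lat a wL] C_I[OF wC] meet_lb2[OF lat a wL]] .
  have M: "meet D ?aa ?cc = meet L a w @ [False]" using meet_D[OF aD ccD] mI nC by simp
  have MD: "meet L a w @ [False] \<in> D" using mI by simp
  have "join D ?bb (meet D ?aa ?cc) = ?bb"
    using join_leq2[OF lat_D bbD MD] M meet_lb2[OF lat a wL] by simp
  then show False using eq LHS by simp
qed

end



lemma maxchain_elem:
  assumes "maximal_chain A M" "y \<in> A" "\<forall>m\<in>M. leq m y \<or> leq y m"
  shows "y \<in> M"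
proof -
  have "is_chain A (insert y M)"
    using assms unfolding maximal_chain_def is_chain_def by auto
  then have "insert y M = M" using assms(1) unfolding maximal_chain_def by blast
  then show ?thesis by blast
qed

lemma maxchain_intro:
  assumes "is_chain A M" "\<forall>y\<in>A. (\<forall>m\<in>M. leq m y \<or> leq y m) \<longrightarrow> y \<in> M"
  shows "maximal_chain A M"
  unfolding maximal_chain_def
proof (intro conjI allI impI)
  show "is_chain A M" by fact
  fix M' assume h: "is_chain A M' \<and> M \<subseteq> M'"
  have "y \<in> M" if "y \<in> M'" for y
  proof -
    have "y \<in> A" using h that unfolding is_chain_def by blast
    moreover have "\<forall>m\<in>M. leq m y \<or> leq y m" using h that unfolding is_chain_def by blast
    ultimately show ?thesis using assms(2) by blast
  qed
  then show "M' = M" using h by blast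
qed

definition cnt :: "bool list \<Rightarrow> nat" where "cnt x = length (filter id x)"

lemma cnt_mono: "leq x y \<Longrightarrow> cnt x \<le> cnt y \<and> (cnt x = cnt y \<longrightarrow> x = y)"
  unfolding leq_def cnt_def
proof (induct rule: list_all2_induct)
  case Nil then show ?case by simp
next
  case (Cons a as b bs) then show ?case by (cases a; cases b) auto
qed

lemma exists_maximal:
  assumes "finite S" "s \<in> S"
  shows "\<exists>m\<in>S. leq s m \<and> (\<forall>u\<in>S. leq m u \<longrightarrow> u = m)"
proof -
  let ?S = "{u\<in>S. leq s u}"
  have fin: "finite ?S" "?S \<noteq> {}" using assms by auto
  obtain m where m: "m \<in> ?S" "cnt m = Max (cnt ` ?S)"
    using Max_in[of "cnt ` ?S"] fin by (metis (no_types, lifting) finite_imageI image_iff image_is_empty)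
  have "u = m" if "u \<in> S" "leq m u" for u
  proof -
    have "u \<in> ?S" using that m leq_trans by blast
    then have "cnt u \<le> cnt m" using m fin Max_ge by simp
    then show ?thesis using cnt_mono[OF that(2)] by auto
  qed
  then show ?thesis using m by blast
qed

lemma exists_minimal:
  assumes "finite S" "s \<in> S"
  shows "\<exists>m\<in>S. leq m s \<and> (\<forall>u\<in>S. leq u m \<longrightarrow> u = m)"
proof -
  let ?S = "{u\<in>S. leq u s}"
  have fin: "finite ?S" "?S \<noteq> {}" using assms by auto
  obtain m where m: "m \<in> ?S" "cnt m = Min (cnt ` ?S)"
    using Min_in[of "cnt ` ?S"] fin by (metis (no_types, lifting) finite_imageI image_iff image_is_empty)
  have "u = m" if "u \<in> S" "leq u m" for u
  proof -
    have "u \<in> ?S" using that m leq_trans by blast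
    then have "cnt m \<le> cnt u" using m fin Min_le by simp
    then show ?thesis using cnt_mono[OF that(2)] by auto
  qed
  then show ?thesis using m by blast
qed

context dbl
begin

lemma finite_C: "finite C"
  using C_sub lat unfolding is_lat_def by (meson finite_subset)

lemma heart_join:
  assumes x: "x \<in> heart C" and wC: "w \<in> C"
  shows "join L x w \<in> C"
proof -
  obtain cm where cm: "cm \<in> C" "leq w cm" "\<forall>u\<in>C. leq cm u \<longrightarrow> u = cm"
    using exists_maximal[OF finite_C wC] by blast
  have xC: "x \<in> C" and "leq x cm" using x cm unfolding heart_def by auto
  have xL: "x \<in> L" and wL: "w \<in> L" and cmL: "cm \<in> L" using xC wC cm C_sub by auto
  have "leq (join L x w) cm" using join_least[OF lat xL wL cmL `leq x cm` cm(2)] .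
  then show ?thesis using conv_mid[OF wC cm(1) join_in[OF lat xL wL] join_ub2[OF lat xL wL]] by blast
qed

lemma heart_meet:
  assumes x: "x \<in> heart C" and wC: "w \<in> C"
  shows "meet L x w \<in> C"
proof -
  obtain cm where cm: "cm \<in> C" "leq cm w" "\<forall>u\<in>C. leq u cm \<longrightarrow> u = cm"
    using exists_minimal[OF finite_C wC] by blast
  have xC: "x \<in> C" and "leq cm x" using x cm unfolding heart_def by auto
  have xL: "x \<in> L" and wL: "w \<in> L" and cmL: "cm \<in> L" using xC wC cm C_sub by auto
  have "leq cm (meet L x w)" using meet_greatest[OF lat xL wL cmL `leq cm x` cm(2)] .
  then show ?thesis using conv_mid[OF cm(1) wC meet_in[OF lat xL wL] _ meet_lb2[OF lat xL wL]] by blast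
qed

lemma heart_intro:
  assumes xC: "x \<in> C" and J: "\<forall>w\<in>C. join L x w \<in> C" and M: "\<forall>w\<in>C. meet L x w \<in> C"
  shows "x \<in> heart C"
proof -
  have xL: "x \<in> L" using xC C_sub by blast
  have "leq x m" if "m \<in> C" "\<forall>u\<in>C. leq m u \<longrightarrow> u = m" for m
  proof -
    have mL: "m \<in> L" using that C_sub by blast
    have "join L x m = m" using that(2) J that(1) join_ub2[OF lat xL mL] by blast
    then show ?thesis using join_ub1[OF lat xL mL] by simp
  qed
  moreover have "leq m x" if "m \<in> C" "\<forall>u\<in>C. leq u m \<longrightarrow> u = m" for m
  proof -
    have mL: "m \<in> L" using that C_sub by blast
    have "meet L x m = m" using that(2) M that(1) meet_lb2[OF lat xL mL] by blast
    then show ?thesis using meet_lb1[OF lat xL mL] by simp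
  qed
  ultimately show ?thesis unfolding heart_def using xC by blast
qed

end



context dbl
begin

lemma lift_chain:
  assumes xh: "x \<in> heart C" and MM: "maximal_left_modular_chain L M" and xM: "x \<in> M"
  shows "left_modular_lattice D"
proof -
  have mc: "maximal_chain L M" and lmM: "\<forall>a\<in>M. left_modular_elem L a"
    using MM unfolding maximal_left_modular_chain_def by auto
  have ch: "is_chain L M" using mc unfolding maximal_chain_def by blast
  have MsubL: "M \<subseteq> L" and cmp: "\<forall>u\<in>M. \<forall>v\<in>M. leq u v \<or> leq v u" using ch unfolding is_chain_def by auto
  have xC: "x \<in> C" using xh unfolding heart_def by blast
  define Mh where "Mh = {m @ [False] | m. m \<in> M \<and> leq m x} \<union> {m @ [True] | m. m \<in> M \<and> leq x m}"
  have memF: "m @ [False] \<in> Mh \<longleftrightarrow> m \<in> M \<and> leq m x" for m unfolding Mh_def by auto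
  have memT: "m @ [True] \<in> Mh \<longleftrightarrow> m \<in> M \<and> leq x m" for m unfolding Mh_def by auto
  have formMh: "p \<in> Mh \<Longrightarrow> \<exists>m b. p = m @ [b]" for p unfolding Mh_def by auto
  have DF: "m @ [False] \<in> D" if "m \<in> M" "leq m x" for m
    using down_closed[OF _ C_I[OF xC] that(2)] that MsubL by auto
  have DT: "m @ [True] \<in> D" if "m \<in> M" "leq x m" for m
  proof -
    have "m \<in> L" using that MsubL by blast
    moreover have "m \<in> I \<Longrightarrow> m \<in> C" using conv_up[OF xC _ that(2)] by blast
    ultimately show ?thesis by auto
  qed
  have MhD: "Mh \<subseteq> D"
  proof
    fix p assume "p \<in> Mh"
    then obtain m b where p: "p = m @ [b]" using formMh by blast
    show "p \<in> D" using DF DT `p \<in> Mh` p memF memT by (cases b) auto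
  qed
  have chMh: "is_chain D Mh"
    unfolding is_chain_def
  proof (intro conjI ballI)
    show "Mh \<subseteq> D" by (rule MhD)
  next
    fix p q assume p: "p \<in> Mh" and q: "q \<in> Mh"
    obtain m b where pm: "p = m @ [b]" using formMh p by blast
    obtain n c where qn: "q = n @ [c]" using formMh q by blast
    have mM: "m \<in> M" and nM: "n \<in> M" using p q pm qn memF memT by (cases b; cases c; auto)+
    show "leq p q \<or> leq q p"
    proof (cases b; cases c)
      assume "b" "c" then show ?thesis using pm qn cmp mM nM by auto
    next
      assume "\<not> b" "\<not> c" then show ?thesis using pm qn cmp mM nM by auto
    next
      assume "b" "\<not> c"
      then have "leq x m" "leq n x" using p q pm qn memF memT by auto
      then show ?thesis using pm qn `b` `\<not> c` leq_trans by auto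
    next
      assume "\<not> b" "c"
      then have "leq m x" "leq x n" using p q pm qn memF memT by auto
      then show ?thesis using pm qn `\<not> b` `c` leq_trans by auto
    qed
  qed
  have maxMh: "maximal_chain D Mh"
  proof (rule maxchain_intro[OF chMh], intro ballI impI)
    fix yy assume yyD: "yy \<in> D" and cy: "\<forall>p\<in>Mh. leq p yy \<or> leq yy p"
    obtain y k where yy: "yy = y @ [k]" using D_form[OF yyD] by blast
    have yL: "y \<in> L" using yyD yy D_L by simp
    have "leq m y \<or> leq y m" if mM: "m \<in> M" for m
    proof (cases "leq m x")
      case True
      then have "m @ [False] \<in> Mh" using memF mM by blast
      then show ?thesis using cy yy by auto
    next
      case False
      then have "leq x m" using cmp mM xM by blast
      then have "m @ [True] \<in> Mh" using memT mM by blast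
      then show ?thesis using cy yy by auto
    qed
    then have yM: "y \<in> M" using maxchain_elem[OF mc yL] by blast
    show "yy \<in> Mh"
    proof (cases k)
      case False
      have "x @ [True] \<in> Mh" using memT xM by simp
      then have "leq y x" using cy yy False by auto
      then show ?thesis using memF yM yy False by simp
    next
      case True
      have "x @ [False] \<in> Mh" using memF xM by simp
      then have "leq x y" using cy yy True by auto
      then show ?thesis using memT yM yy True by simp
    qed
  qed
  have lmMh: "\<forall>p\<in>Mh. left_modular_elem D p"
  proof
    fix p assume p: "p \<in> Mh"
    obtain m b where pm: "p = m @ [b]" using formMh p by blast
    have xL: "x \<in> L" using xC C_sub by blast
    show "left_modular_elem D p"
    proof (cases b)
      case False
      then have mM: "m \<in> M" and mx: "leq m x" using p pm memF by auto
      have mL: "m \<in> L" using mM MsubL by blast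
      have "join L m w \<in> C" if wC: "w \<in> C" for w
      proof -
        have wL: "w \<in> L" using wC C_sub by blast
        have jx: "join L x w \<in> C" using heart_join[OF xh wC] .
        have jxL: "join L x w \<in> L" using join_in[OF lat xL wL] .
        have "leq (join L m w) (join L x w)"
          using join_least[OF lat mL wL jxL leq_trans[OF mx join_ub1[OF lat xL wL]] join_ub2[OF lat xL wL]] .
        then show ?thesis using conv_mid[OF wC jx join_in[OF lat mL wL] join_ub2[OF lat mL wL]] by blast
      qed
      then show ?thesis using lift_F[of m] DF[OF mM mx] lmM mM pm False by simp
    next
      case True
      then have mM: "m \<in> M" and mx: "leq x m" using p pm memT by auto
      have mL: "m \<in> L" using mM MsubL by blast
      have "meet L m w \<in> C" if wC: "w \<in> C" for w
      proof -
        have wL: "w \<in> L" using wC C_sub by blast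
        have jx: "meet L x w \<in> C" using heart_meet[OF xh wC] .
        have jxL: "meet L x w \<in> L" using meet_in[OF lat xL wL] .
        have "leq (meet L x w) (meet L m w)"
          using meet_greatest[OF lat mL wL jxL leq_trans[OF meet_lb1[OF lat xL wL] mx] meet_lb2[OF lat xL wL]] .
        then show ?thesis using conv_mid[OF jx wC meet_in[OF lat mL wL] _ meet_lb2[OF lat mL wL]] by blast
      qed
      then show ?thesis using lift_T[of m] DT[OF mM mx] lmM mM pm True by simp
    qed
  qed
  show ?thesis unfolding left_modular_lattice_def maximal_left_modular_chain_def
    using maxMh lmMh by blast
qed

end



context dbl
begin

lemma proj_chain:
  assumes MM: "maximal_left_modular_chain D Mh"
  shows "\<exists>x\<in>heart C. \<exists>M. maximal_left_modular_chain L M \<and> x \<in> M"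
proof -
  have mc: "maximal_chain D Mh" and lmMh: "\<forall>p\<in>Mh. left_modular_elem D p"
    using MM unfolding maximal_left_modular_chain_def by auto
  have ch: "is_chain D Mh" using mc unfolding maximal_chain_def by blast
  have MhD: "Mh \<subseteq> D" and cmp: "\<forall>u\<in>Mh. \<forall>v\<in>Mh. leq u v \<or> leq v u" using ch unfolding is_chain_def by auto
  have formMh: "p \<in> Mh \<Longrightarrow> \<exists>m b. p = m @ [b]" for p using D_form MhD by blast
  define M where "M = butlast ` Mh"
  have memM: "m \<in> M \<longleftrightarrow> (\<exists>b. m @ [b] \<in> Mh)" for m
  proof
    assume "m \<in> M"
    then obtain p where p: "p \<in> Mh" "m = butlast p" unfolding M_def by blast
    obtain n b where "p = n @ [b]" using formMh[OF p(1)] by blast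
    then show "\<exists>b. m @ [b] \<in> Mh" using p by auto
  next
    assume "\<exists>b. m @ [b] \<in> Mh"
    then obtain b where "m @ [b] \<in> Mh" by blast
    then show "m \<in> M" unfolding M_def by (metis butlast_snoc image_eqI)
  qed
  have MsubL: "M \<subseteq> L" using memM MhD D_L by blast
  have chM: "is_chain L M" unfolding is_chain_def
  proof (intro conjI ballI)
    show "M \<subseteq> L" by (rule MsubL)
  next
    fix u v assume "u \<in> M" "v \<in> M"
    then obtain b c where "u @ [b] \<in> Mh" "v @ [c] \<in> Mh" using memM by blast
    then show "leq u v \<or> leq v u" using cmp by fastforce
  qed
  have lmM: "\<forall>a\<in>M. left_modular_elem L a"
    using memM lmMh proj_LM by blast
  have mcM: "maximal_chain L M"
  proof (rule maxchain_intro[OF chM], intro ballI impI)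
    fix y assume yL: "y \<in> L" and cy: "\<forall>m\<in>M. leq m y \<or> leq y m"
    have cy': "leq m y \<or> leq y m" if "m @ [i] \<in> Mh" for m i
      using cy memM that by blast
    have "\<exists>k. y @ [k] \<in> Mh"
    proof (cases "y \<in> I")
      case False
      have yD: "y @ [True] \<in> D" using yL False by simp
      have "\<forall>p\<in>Mh. leq p (y @ [True]) \<or> leq (y @ [True]) p"
      proof
        fix p assume p: "p \<in> Mh"
        obtain m i where pm: "p = m @ [i]" using formMh[OF p] by blast
        have mD: "m @ [i] \<in> D" using p pm MhD by blast
        show "leq p (y @ [True]) \<or> leq (y @ [True]) p"
        proof (cases "leq m y")
          case True then show ?thesis using pm by simp
        next
          case nle: False
          then have ym: "leq y m" using cy' p pm by blast
          have "m \<notin> I" using down_closed[OF yL _ ym] False by blast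
          then have "i" using mD by (cases i) auto
          then show ?thesis using pm ym by simp
        qed
      qed
      then show ?thesis using maxchain_elem[OF mc yD] by blast
    next
      case yI: True
      show ?thesis
      proof (cases "y \<in> C")
        case False
        have yD: "y @ [False] \<in> D" using yI by simp
        have "\<forall>p\<in>Mh. leq p (y @ [False]) \<or> leq (y @ [False]) p"
        proof
          fix p assume p: "p \<in> Mh"
          obtain m i where pm: "p = m @ [i]" using formMh[OF p] by blast
          have mD: "m @ [i] \<in> D" using p pm MhD by blast
          have mL: "m \<in> L" using D_L[OF mD] .
          show "leq p (y @ [False]) \<or> leq (y @ [False]) p"
          proof (cases "leq y m")
            case True then show ?thesis using pm by simp
          next
            case nle: False
            then have my: "leq m y" using cy' p pm by blast
            have mI: "m \<in> I" using down_closed[OF mL yI my] .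
            have "\<not> i"
            proof
              assume i
              then have "m \<in> C" using mD mI by simp
              then show False using conv_up[OF _ yI my] False by blast
            qed
            then show ?thesis using pm my by simp
          qed
        qed
        then show ?thesis using maxchain_elem[OF mc yD] by blast
      next
        case yC: True
        have yDF: "y @ [False] \<in> D" using yI by simp
        have yDT: "y @ [True] \<in> D" using yC yL by simp
        show ?thesis
        proof (rule ccontr)
          assume nex: "\<nexists>k. y @ [k] \<in> Mh"
          have "\<not> (\<forall>p\<in>Mh. leq p (y @ [False]) \<or> leq (y @ [False]) p)"
            using maxchain_elem[OF mc yDF] nex by blast
          then obtain p where p: "p \<in> Mh" "\<not> leq p (y @ [False])" "\<not> leq (y @ [False]) p" by blast
          obtain m i where pm: "p = m @ [i]" using formMh[OF p(1)] by blast
          have "\<not> leq y m" using p(3) pm by simp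
          then have my: "leq m y" using cy' p(1) pm by blast
          then have i: "i" using p(2) pm by (cases i) auto
          have "\<not> (\<forall>p\<in>Mh. leq p (y @ [True]) \<or> leq (y @ [True]) p)"
            using maxchain_elem[OF mc yDT] nex by blast
          then obtain q where q: "q \<in> Mh" "\<not> leq q (y @ [True])" "\<not> leq (y @ [True]) q" by blast
          obtain n j where qn: "q = n @ [j]" using formMh[OF q(1)] by blast
          have "\<not> leq n y" using q(2) qn by simp
          then have yn: "leq y n" using cy' q(1) qn by blast
          then have j: "\<not> j" using q(3) qn by (cases j) auto
          have "leq p q \<or> leq q p" using cmp p(1) q(1) by blast
          moreover have "\<not> leq p q" using pm qn i j by simp
          moreover have "leq q p \<Longrightarrow> leq n m" using pm qn by simp
          ultimately show False using leq_trans[OF _ my] `\<not> leq n y` by blast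
        qed
      qed
    qed
    then show "y \<in> M" using memM by blast
  qed
  have MMl: "maximal_left_modular_chain L M"
    unfolding maximal_left_modular_chain_def using mcM lmM by blast
  obtain w0 where w0: "w0 \<in> C" using ne by blast
  have w0L: "w0 \<in> L" using w0 C_sub by blast
  define A where "A = {m. m @ [False] \<in> Mh}"
  define B where "B = {m. m @ [True] \<in> Mh}"
  have AM: "A \<subseteq> M" and BM: "B \<subseteq> M" using memM unfolding A_def B_def by blast+
  have finM: "finite M" using MsubL lat unfolding is_lat_def by (meson finite_subset)
  have finA: "finite A" and finB: "finite B" using AM BM finM finite_subset by blast+
  have AL: "A \<subseteq> L" and BL: "B \<subseteq> L" using AM BM MsubL by auto
  have cmpA: "leq u v \<or> leq v u" if "u \<in> A" "v \<in> A" for u v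
    using cmp that unfolding A_def by fastforce
  have cmpB: "leq u v \<or> leq v u" if "u \<in> B" "v \<in> B" for u v
    using cmp that unfolding B_def by fastforce
  have AB: "leq a b" if "a \<in> A" "b \<in> B" for a b
  proof -
    have "leq (a @ [False]) (b @ [True]) \<or> leq (b @ [True]) (a @ [False])"
      using cmp that unfolding A_def B_def by blast
    then show ?thesis by simp
  qed
  have Mhne: "Mh \<noteq> {}"
  proof
    assume "Mh = {}"
    have "w0 @ [False] \<in> D" using C_I[OF w0] by simp
    then have "is_chain D {w0 @ [False]}" unfolding is_chain_def by simp
    then have "{w0 @ [False]} = Mh" using mc `Mh = {}` unfolding maximal_chain_def by blast
    then show False using `Mh = {}` by blast
  qed
  have AorB: "A \<noteq> {} \<or> B \<noteq> {}"
  proof -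
    obtain p where "p \<in> Mh" using Mhne by blast
    moreover obtain m b where "p = m @ [b]" using formMh[OF `p \<in> Mh`] by blast
    ultimately show ?thesis unfolding A_def B_def by (cases b) auto
  qed
  have Ane: "A \<noteq> {}"
  proof
    assume Ae: "A = {}"
    then have "B \<noteq> {}" using AorB by blast
    then obtain s where "s \<in> B" by blast
    obtain b where b: "b \<in> B" "\<forall>u\<in>B. leq u b \<longrightarrow> u = b"
      using exists_minimal[OF finB `s \<in> B`] by blast
    have bmin: "leq b u" if "u \<in> B" for u using cmpB[OF b(1) that] b(2) that by auto
    have bL: "b \<in> L" using b BL by blast
    let ?y = "meet L b w0"
    have yL: "?y \<in> L" using meet_in[OF lat bL w0L] .
    have yI: "?y \<in> I" using down_closed[OF yL C_I[OF w0] meet_lb2[OF lat bL w0L]] .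
    have yD: "?y @ [False] \<in> D" using yI by simp
    have "\<forall>p\<in>Mh. leq p (?y @ [False]) \<or> leq (?y @ [False]) p"
    proof
      fix p assume p: "p \<in> Mh"
      obtain m i where pm: "p = m @ [i]" using formMh[OF p] by blast
      have "i" using p pm Ae unfolding A_def by (cases i) auto
      then have "m \<in> B" using p pm unfolding B_def by simp
      then have "leq ?y m" using leq_trans[OF meet_lb1[OF lat bL w0L] bmin] by blast
      then show "leq p (?y @ [False]) \<or> leq (?y @ [False]) p" using pm `i` by simp
    qed
    then have "?y @ [False] \<in> Mh" using maxchain_elem[OF mc yD] by blast
    then show False using Ae unfolding A_def by blast
  qed
  have Bne: "B \<noteq> {}"
  proof
    assume Be: "B = {}"
    obtain s where "s \<in> A" using Ane by blast
    obtain a where a: "a \<in> A" "\<forall>u\<in>A. leq a u \<longrightarrow> u = a"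
      using exists_maximal[OF finA `s \<in> A`] by blast
    have amax: "leq u a" if "u \<in> A" for u using cmpA[OF a(1) that] a(2) that by auto
    have aL: "a \<in> L" using a AL by blast
    let ?y = "join L a w0"
    have yL: "?y \<in> L" using join_in[OF lat aL w0L] .
    have "?y \<in> I \<Longrightarrow> ?y \<in> C" using conv_up[OF w0 _ join_ub2[OF lat aL w0L]] by blast
    then have yD: "?y @ [True] \<in> D" using yL by auto
    have "\<forall>p\<in>Mh. leq p (?y @ [True]) \<or> leq (?y @ [True]) p"
    proof
      fix p assume p: "p \<in> Mh"
      obtain m i where pm: "p = m @ [i]" using formMh[OF p] by blast
      have "\<not> i" using p pm Be unfolding B_def by (cases i) auto
      then have "m \<in> A" using p pm unfolding A_def by simp
      then have "leq m ?y" using leq_trans[OF amax join_ub1[OF lat aL w0L]] by blast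
      then show "leq p (?y @ [True]) \<or> leq (?y @ [True]) p" using pm by simp
    qed
    then have "?y @ [True] \<in> Mh" using maxchain_elem[OF mc yD] by blast
    then show False using Be unfolding B_def by blast
  qed
  obtain s where "s \<in> A" using Ane by blast
  obtain a where a: "a \<in> A" "\<forall>u\<in>A. leq a u \<longrightarrow> u = a"
    using exists_maximal[OF finA `s \<in> A`] by blast
  have amax: "leq u a" if "u \<in> A" for u using cmpA[OF a(1) that] a(2) that by auto
  obtain t where "t \<in> B" using Bne by blast
  obtain b where b: "b \<in> B" "\<forall>u\<in>B. leq u b \<longrightarrow> u = b"
    using exists_minimal[OF finB `t \<in> B`] by blast
  have bmin: "leq b u" if "u \<in> B" for u using cmpB[OF b(1) that] b(2) that by auto
  have aL: "a \<in> L" and bL: "b \<in> L" using a b AL BL by auto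
  have ab: "leq a b" using AB a(1) b(1) .
  have lmA: "left_modular_elem D (a @ [False])" using lmMh a(1) unfolding A_def by blast
  have lmB: "left_modular_elem D (b @ [True])" using lmMh b(1) unfolding B_def by blast
  have elemsA: "m \<in> A" if "m @ [False] \<in> Mh" for m using that unfolding A_def by simp
  have elemsB: "m \<in> B" if "m @ [True] \<in> Mh" for m using that unfolding B_def by simp
  have "a = b"
  proof (rule ccontr)
    assume anb: "a \<noteq> b"
    let ?w = "join L a w0"
    have wC: "?w \<in> C" using LM_F[OF lmA w0] .
    have wL: "?w \<in> L" using wC C_sub by blast
    let ?y = "meet L b ?w"
    have yC: "?y \<in> C" using LM_T[OF lmB wC] .
    have yL: "?y \<in> L" using yC C_sub by blast
    have ay: "leq a ?y" using meet_greatest[OF lat bL wL aL ab join_ub1[OF lat aL w0L]] .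
    have yb: "leq ?y b" using meet_lb1[OF lat bL wL] .
    have yD: "?y @ [False] \<in> D" using C_I[OF yC] by simp
    have "\<forall>p\<in>Mh. leq p (?y @ [False]) \<or> leq (?y @ [False]) p"
    proof
      fix p assume p: "p \<in> Mh"
      obtain m i where pm: "p = m @ [i]" using formMh[OF p] by blast
      show "leq p (?y @ [False]) \<or> leq (?y @ [False]) p"
      proof (cases i)
        case True
        then have "m \<in> B" using p pm elemsB by simp
        then have "leq ?y m" using leq_trans[OF yb bmin] by blast
        then show ?thesis using pm True by simp
      next
        case False
        then have "m \<in> A" using p pm elemsA by simp
        then have "leq m ?y" using leq_trans[OF amax ay] by blast
        then show ?thesis using pm False by simp
      qed
    qed
    then have "?y @ [False] \<in> Mh" using maxchain_elem[OF mc yD] by blast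
    then have "leq ?y a" using amax elemsA by blast
    then have ya: "?y = a" using ay leq_antisym by blast
    then have aC: "a \<in> C" using yC by simp
    have aD: "a @ [True] \<in> D" using aC aL by simp
    have "\<forall>p\<in>Mh. leq p (a @ [True]) \<or> leq (a @ [True]) p"
    proof
      fix p assume p: "p \<in> Mh"
      obtain m i where pm: "p = m @ [i]" using formMh[OF p] by blast
      show "leq p (a @ [True]) \<or> leq (a @ [True]) p"
      proof (cases i)
        case True
        then have "m \<in> B" using p pm elemsB by simp
        then have "leq a m" using leq_trans[OF ab bmin] by blast
        then show ?thesis using pm True by simp
      next
        case False
        then have "m \<in> A" using p pm elemsA by simp
        then have "leq m a" using amax by blast
        then show ?thesis using pm False by simp
      qed
    qed
    then have "a @ [True] \<in> Mh" using maxchain_elem[OF mc aD] by blast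
    then have "leq b a" using bmin elemsB by blast
    then show False using ab anb leq_antisym by blast
  qed
  have "a \<in> I" using a(1) MhD unfolding A_def by auto
  moreover have "a \<notin> I \<or> a \<in> C" using b(1) MhD `a = b` unfolding B_def by auto
  ultimately have aC: "a \<in> C" by blast
  have "a \<in> heart C"
    using heart_intro[OF aC] LM_F[OF lmA] LM_T[OF lmB[folded `a = b`]] by blast
  moreover have "a \<in> M" using a(1) memM unfolding A_def by blast
  ultimately show ?thesis using MMl by blast
qed

end



lemma key:
  assumes "dbl L C"
  shows "left_modular_lattice (doubling L C) \<longleftrightarrow>
    (\<exists>x\<in>heart C. \<exists>M. maximal_left_modular_chain L M \<and> x \<in> M)"
  using dbl.lift_chain[OF assms] dbl.proj_chain[OF assms]
  unfolding left_modular_lattice_def by blast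

lemma E_Suc: "k < length Cs \<Longrightarrow> E (take (Suc k) Cs) = doubling (E (take k Cs)) (Cs ! k)"
  unfolding E_def by (simp add: take_Suc_conv_app_nth)

lemma E_0: "E (take 0 Cs) = {[]}"
  unfolding E_def by simp

lemma lat_base: "is_lat {[]}"
  unfolding is_lat_def is_lub_def is_glb_def by simp

lemma lat_E: "doubling_seq Cs \<Longrightarrow> k \<le> length Cs \<Longrightarrow> is_lat (E (take k Cs))"
proof (induct k)
  case 0 then show ?case using lat_base E_0 by simp
next
  case (Suc k)
  then have "k < length Cs" by simp
  then have "dbl (E (take k Cs)) (Cs ! k)"
    using Suc unfolding doubling_seq_def by (intro dbl.intro) auto
  then show ?case using E_Suc[OF `k < length Cs`] dbl.lat_D by simp
qed

lemma lm_base: "left_modular_lattice {[]}"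
proof -
  have "maximal_chain {[]} {[]}"
    unfolding maximal_chain_def is_chain_def by auto
  moreover have "left_modular_elem {[]} []"
    unfolding left_modular_elem_def lt_def by auto
  ultimately show ?thesis
    unfolding left_modular_lattice_def maximal_left_modular_chain_def by blast
qed

theorem theorem3p12:
  fixes Cs :: "bool list set list"
  assumes "doubling_seq Cs"
  shows "left_modular_lattice (E Cs) \<longleftrightarrow>
    (\<forall>i<length Cs. \<exists>x\<in>heart (Cs ! i).
       \<exists>M. maximal_left_modular_chain (E (take i Cs)) M \<and> x \<in> M)"
proof -
  let ?cond = "\<lambda>i. \<exists>x\<in>heart (Cs ! i). \<exists>M. maximal_left_modular_chain (E (take i Cs)) M \<and> x \<in> M"
  have "k \<le> length Cs \<Longrightarrow> left_modular_lattice (E (take k Cs)) \<longleftrightarrow> (\<forall>i<k. ?cond i)" for k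
  proof (induct k)
    case 0 then show ?case using lm_base E_0 by simp
  next
    case (Suc k)
    then have k: "k < length Cs" by simp
    then have d: "dbl (E (take k Cs)) (Cs ! k)"
      using assms lat_E[OF assms] unfolding doubling_seq_def by (intro dbl.intro) auto
    have "left_modular_lattice (E (take (Suc k) Cs)) \<longleftrightarrow> ?cond k"
      using key[OF d] E_Suc[OF k] by simp
    moreover have "?cond k \<Longrightarrow> left_modular_lattice (E (take k Cs))"
      unfolding left_modular_lattice_def by blast
    ultimately show ?case using Suc k by (auto simp: less_Suc_eq)
  qed
  from this[of "length Cs"] show ?thesis by simp
qed


end
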